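(* Let $A$ be a subset of a Hausdorff topological vector space over $\mathbb{R}$. Consider: (i) $A$ is topologically linearly independent; (ii) $A$ is topologically independent; (iii) $A$ is linearly independent. Then (i) implies (ii) and (ii) implies (iii). Moreover, if $A$ is finite, then (i), (ii), (iii) are equivalent.
   Context: Let $X$ be a topological vector space with zero $0$. A subset $A\subseteq X\setminus\{0\}$ is topologically linearly independent if for every neighborhood $W$ of $0$ there is a neighborhood $U$ of $0$ such that for every finite $F\subseteq A$ and reals $\{r_a: a\in F\}$, $\sum_{a\in F}r_a a\in U$ implies $r_a a\in W$ for all $a\in F$. A subset $A\subseteq X\setminus\{0\}$ is topologically independent if the same holds with the reals $r_a$ replaced by integers $z_a$. *)

theory Defs
  imports "HOL-Analysis.Analysis"
begin

definition tvs :: "'a::{real_vector, topological_space} itself \<Rightarrow> bool" where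
  "tvs _ \<longleftrightarrow>
     continuous_on UNIV (\<lambda>p::'a \<times> 'a. fst p + snd p) \<and>
     continuous_on UNIV (\<lambda>p::real \<times> 'a. fst p *\<^sub>R snd p)"

definition nbhd0 :: "'a::{real_vector, topological_space} set \<Rightarrow> bool" where
  "nbhd0 W \<longleftrightarrow> (\<exists>V. open V \<and> 0 \<in> V \<and> V \<subseteq> W)"

definition top_lin_indep :: "'a::{real_vector, topological_space} set \<Rightarrow> bool" where
  "top_lin_indep A \<longleftrightarrow> A \<subseteq> UNIV - {0} \<and>
     (\<forall>W. nbhd0 W \<longrightarrow> (\<exists>U. nbhd0 U \<and>
        (\<forall>F (r::'a \<Rightarrow> real). finite F \<longrightarrow> F \<subseteq> A \<longrightarrow>
            (\<Sum>a\<in>F. r a *\<^sub>R a) \<in> U \<longrightarrow> (\<forall>a\<in>F. r a *\<^sub>R a \<in> W))))"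

definition top_indep :: "'a::{real_vector, topological_space} set \<Rightarrow> bool" where
  "top_indep A \<longleftrightarrow> A \<subseteq> UNIV - {0} \<and>
     (\<forall>W. nbhd0 W \<longrightarrow> (\<exists>U. nbhd0 U \<and>
        (\<forall>F (z::'a \<Rightarrow> int). finite F \<longrightarrow> F \<subseteq> A \<longrightarrow>
            (\<Sum>a\<in>F. of_int (z a) *\<^sub>R a) \<in> U \<longrightarrow> (\<forall>a\<in>F. of_int (z a) *\<^sub>R a \<in> W))))"

end

theory Submission imports Defs "HOL-Analysis.Analysis" begin

lemma open_vim: "continuous_on UNIV f \<Longrightarrow> open B \<Longrightarrow> open (f -` B)"
  by (rule continuous_imp_open_vimage) auto

lemma cont_add:
  fixes f g :: "'b::topological_space \<Rightarrow> 'a::{real_vector,topological_space}"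
  assumes "tvs TYPE('a)" "continuous_on S f" "continuous_on S g"
  shows "continuous_on S (\<lambda>x. f x + g x)"
proof -
  have c: "continuous_on UNIV (\<lambda>p::'a \<times> 'a. fst p + snd p)" using assms(1) by (simp add: tvs_def)
  have "continuous_on S ((\<lambda>p::'a \<times> 'a. fst p + snd p) \<circ> (\<lambda>x. (f x, g x)))"
    by (rule continuous_on_compose[OF continuous_on_Pair[OF assms(2,3)]])
       (rule continuous_on_subset[OF c], simp)
  thus ?thesis by (simp add: o_def)
qed

lemma cont_scale:
  fixes f :: "'b::topological_space \<Rightarrow> real" and g :: "'b \<Rightarrow> 'a::{real_vector,topological_space}"
  assumes "tvs TYPE('a)" "continuous_on S f" "continuous_on S g"
  shows "continuous_on S (\<lambda>x. f x *\<^sub>R g x)"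
proof -
  have c: "continuous_on UNIV (\<lambda>p::real \<times> 'a. fst p *\<^sub>R snd p)" using assms(1) by (simp add: tvs_def)
  have "continuous_on S ((\<lambda>p::real \<times> 'a. fst p *\<^sub>R snd p) \<circ> (\<lambda>x. (f x, g x)))"
    by (rule continuous_on_compose[OF continuous_on_Pair[OF assms(2,3)]])
       (rule continuous_on_subset[OF c], simp)
  thus ?thesis by (simp add: o_def)
qed

lemma add_nbhd:
  fixes U :: "'a::{real_vector,topological_space} set"
  assumes "tvs TYPE('a)" "open U" "0 \<in> U"
  obtains V where "open V" "0 \<in> V" "\<And>x y. x \<in> V \<Longrightarrow> y \<in> V \<Longrightarrow> x + y \<in> U"
proof -
  have c: "continuous_on UNIV (\<lambda>p::'a \<times> 'a. fst p + snd p)" using assms(1) by (simp add: tvs_def)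
  have o: "open ((\<lambda>p::'a \<times> 'a. fst p + snd p) -` U)" by (rule open_vim[OF c assms(2)])
  have "(0,0) \<in> (\<lambda>p::'a \<times> 'a. fst p + snd p) -` U" using assms(3) by simp
  then obtain P Q where "open P" "open Q" "(0,0) \<in> P \<times> Q" "P \<times> Q \<subseteq> (\<lambda>p::'a \<times> 'a. fst p + snd p) -` U"
    using open_prod_elim[OF o] by metis
  thus ?thesis by (intro that[of "P \<inter> Q"]) auto
qed

lemma scale_nbhd:
  fixes V :: "'a::{real_vector,topological_space} set"
  assumes "tvs TYPE('a)" "open V" "0 \<in> V"
  obtains d W0 where "d > 0" "open W0" "0 \<in> W0" "\<And>t x. \<bar>t\<bar> < d \<Longrightarrow> x \<in> W0 \<Longrightarrow> t *\<^sub>R x \<in> V"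
proof -
  have c: "continuous_on UNIV (\<lambda>p::real \<times> 'a. fst p *\<^sub>R snd p)" using assms(1) by (simp add: tvs_def)
  have o: "open ((\<lambda>p::real \<times> 'a. fst p *\<^sub>R snd p) -` V)" by (rule open_vim[OF c assms(2)])
  have "(0,0) \<in> (\<lambda>p::real \<times> 'a. fst p *\<^sub>R snd p) -` V" using assms(3) by simp
  then obtain P Q where PQ: "open P" "open Q" "(0,0) \<in> P \<times> Q" "P \<times> Q \<subseteq> (\<lambda>p::real \<times> 'a. fst p *\<^sub>R snd p) -` V"
    using open_prod_elim[OF o] by metis
  then obtain d where d: "d > 0" "ball 0 d \<subseteq> P" by (meson SigmaD1 open_contains_ball)
  show ?thesis
  proof (rule that[OF d(1) PQ(2)])
    show "0 \<in> Q" using PQ by auto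
    fix t x assume "\<bar>t\<bar> < d" "x \<in> Q"
    hence "(t,x) \<in> P \<times> Q" using d by (auto simp: dist_norm)
    thus "t *\<^sub>R x \<in> V" using PQ(4) by auto
  qed
qed

lemma scale_pt:
  fixes V :: "'a::{real_vector,topological_space} set"
  assumes "tvs TYPE('a)" "open V" "0 \<in> V"
  obtains e where "e > 0" "\<And>t. \<bar>t\<bar> \<le> e \<Longrightarrow> t *\<^sub>R a \<in> V"
proof -
  have c: "continuous_on UNIV (\<lambda>p::real \<times> 'a. fst p *\<^sub>R snd p)" using assms(1) by (simp add: tvs_def)
  have o: "open ((\<lambda>p::real \<times> 'a. fst p *\<^sub>R snd p) -` V)" by (rule open_vim[OF c assms(2)])
  have "(0,a) \<in> (\<lambda>p::real \<times> 'a. fst p *\<^sub>R snd p) -` V" using assms(3) by simp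
  then obtain P Q where PQ: "open P" "open Q" "(0,a) \<in> P \<times> Q" "P \<times> Q \<subseteq> (\<lambda>p::real \<times> 'a. fst p *\<^sub>R snd p) -` V"
    using open_prod_elim[OF o] by metis
  then obtain d where d: "d > 0" "ball 0 d \<subseteq> P" by (meson SigmaD1 open_contains_ball)
  show ?thesis
  proof (rule that[of "d/2"])
    show "d/2 > 0" using d by simp
    fix t assume "\<bar>t\<bar> \<le> d/2"
    hence "(t,a) \<in> P \<times> Q" using d PQ by (auto simp: dist_norm)
    thus "t *\<^sub>R a \<in> V" using PQ(4) by auto
  qed
qed

lemma balanced_nbhd:
  fixes V :: "'a::{real_vector,topological_space} set"
  assumes "tvs TYPE('a)" "open V" "0 \<in> V"
  obtains W where "open W" "0 \<in> W" "W \<subseteq> V" "\<And>x s. x \<in> W \<Longrightarrow> \<bar>s\<bar> \<le> 1 \<Longrightarrow> s *\<^sub>R x \<in> W"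
proof -
  obtain d W0 where d: "d > 0" "open W0" "0 \<in> W0" "\<And>t x. \<bar>t\<bar> < d \<Longrightarrow> x \<in> W0 \<Longrightarrow> t *\<^sub>R x \<in> V"
    using scale_nbhd[OF assms] by metis
  define W where "W = (\<Union>t\<in>{t. 0 < \<bar>t\<bar> \<and> \<bar>t\<bar> < d}. (\<lambda>y. (1/t) *\<^sub>R y) -` W0)"
  have cs: "continuous_on UNIV (\<lambda>y::'a. (1/t) *\<^sub>R y)" for t
    by (rule cont_scale[OF assms(1)]) (auto intro: continuous_intros)
  show ?thesis
  proof (rule that[of W])
    show "open W" unfolding W_def by (intro open_UN ballI open_vim[OF cs d(2)])
    have "d/2 \<in> {t. 0 < \<bar>t\<bar> \<and> \<bar>t\<bar> < d}" using d by auto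
    thus "0 \<in> W" unfolding W_def using d(3) by (intro UN_I[of "d/2"]) auto
    show "W \<subseteq> V"
    proof
      fix y assume "y \<in> W"
      then obtain t where t: "0 < \<bar>t\<bar>" "\<bar>t\<bar> < d" "(1/t) *\<^sub>R y \<in> W0" unfolding W_def by auto
      have "t *\<^sub>R ((1/t) *\<^sub>R y) \<in> V" by (rule d(4)[OF t(2,3)])
      thus "y \<in> V" using t by simp
    qed
    fix x s assume x: "x \<in> W" and s: "\<bar>s\<bar> \<le> (1::real)"
    show "s *\<^sub>R x \<in> W"
    proof (cases "s = 0")
      case True thus ?thesis using \<open>0 \<in> W\<close> by simp
    next
      case False
      from x obtain t where t: "0 < \<bar>t\<bar>" "\<bar>t\<bar> < d" "(1/t) *\<^sub>R x \<in> W0" unfolding W_def by auto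
      have "\<bar>s*t\<bar> \<le> \<bar>t\<bar>" using s by (simp add: abs_mult mult_left_le_one_le)
      moreover have "0 < \<bar>s*t\<bar>" using t False by (simp add: abs_mult)
      ultimately have "s*t \<in> {t. 0 < \<bar>t\<bar> \<and> \<bar>t\<bar> < d}" using t(2) by simp
      moreover have "(1/(s*t)) *\<^sub>R (s *\<^sub>R x) = (1/t) *\<^sub>R x" using False by simp
      ultimately show ?thesis unfolding W_def
        by (intro UN_I[of "s*t"]) (simp_all only: vimage_eq t(3))
    qed
  qed
qed


lemma small_sum:
  fixes U :: "'a::{real_vector,topological_space} set"
  assumes "tvs TYPE('a)" "finite F"
  shows "open U \<Longrightarrow> 0 \<in> U \<Longrightarrow> \<exists>e>0. \<forall>r. (\<forall>a\<in>F. \<bar>r a\<bar> \<le> e) \<longrightarrow> (\<Sum>a\<in>F. r a *\<^sub>R a) \<in> U"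
  using assms(2)
proof (induction F arbitrary: U rule: finite_induct)
  case empty thus ?case by (intro exI[of _ 1]) auto
next
  case (insert b F)
  obtain V where V: "open V" "0 \<in> V" "\<And>x y. x \<in> V \<Longrightarrow> y \<in> V \<Longrightarrow> x + y \<in> U"
    using add_nbhd[OF assms(1) insert.prems] by metis
  obtain e1 where e1: "e1 > 0" "\<And>t. \<bar>t\<bar> \<le> e1 \<Longrightarrow> t *\<^sub>R b \<in> V"
    using scale_pt[OF assms(1) V(1,2)] by metis
  obtain e2 where e2: "e2 > 0" "\<forall>r. (\<forall>a\<in>F. \<bar>r a\<bar> \<le> e2) \<longrightarrow> (\<Sum>a\<in>F. r a *\<^sub>R a) \<in> V"
    using insert.IH[OF V(1,2)] by metis
  show ?case
  proof (intro exI[of _ "min e1 e2"] conjI allI impI)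
    show "min e1 e2 > 0" using e1 e2 by simp
    fix r assume r: "\<forall>a\<in>insert b F. \<bar>r a\<bar> \<le> min e1 e2"
    have "r b *\<^sub>R b \<in> V" using r e1 by simp
    moreover have "(\<Sum>a\<in>F. r a *\<^sub>R a) \<in> V" using r e2 by simp
    ultimately show "(\<Sum>a\<in>insert b F. r a *\<^sub>R a) \<in> U" using insert.hyps V(3) by simp
  qed
qed

lemma small_scal:
  fixes W :: "'a::{real_vector,topological_space} set"
  assumes "tvs TYPE('a)" "finite F" "open W" "0 \<in> W"
  shows "\<exists>e>0. \<forall>a\<in>F. \<forall>t. \<bar>t\<bar> \<le> e \<longrightarrow> t *\<^sub>R a \<in> W"
  using assms(2)
proof (induction F rule: finite_induct)
  case empty thus ?case by (intro exI[of _ 1]) auto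
next
  case (insert b F)
  obtain e1 where e1: "e1 > 0" "\<And>t. \<bar>t\<bar> \<le> e1 \<Longrightarrow> t *\<^sub>R b \<in> W"
    using scale_pt[OF assms(1,3,4)] by metis
  obtain e2 where e2: "e2 > 0" "\<forall>a\<in>F. \<forall>t. \<bar>t\<bar> \<le> e2 \<longrightarrow> t *\<^sub>R a \<in> W" using insert.IH by metis
  show ?case using e1 e2 by (intro exI[of _ "min e1 e2"]) auto
qed

definition Cset :: "'a::real_vector set \<Rightarrow> 'a set" where
  "Cset F = {(\<Sum>a\<in>F. t a *\<^sub>R a) | t. \<forall>a\<in>F. \<bar>t a\<bar> \<le> 1}"

lemma Cset_insert:
  assumes "b \<notin> F" "finite F"
  shows "Cset (insert b F) = (\<lambda>p. fst p *\<^sub>R b + snd p) ` ({-1..1} \<times> Cset F)"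
proof
  show "Cset (insert b F) \<subseteq> (\<lambda>p. fst p *\<^sub>R b + snd p) ` ({-1..1} \<times> Cset F)"
  proof
    fix x assume "x \<in> Cset (insert b F)"
    then obtain t where t: "x = (\<Sum>a\<in>insert b F. t a *\<^sub>R a)" "\<forall>a\<in>insert b F. \<bar>t a\<bar> \<le> 1"
      unfolding Cset_def by auto
    have "x = t b *\<^sub>R b + (\<Sum>a\<in>F. t a *\<^sub>R a)" using t(1) assms by simp
    moreover have "(\<Sum>a\<in>F. t a *\<^sub>R a) \<in> Cset F" using t(2) unfolding Cset_def by auto
    moreover have "t b \<in> {-1..1}" using t(2) by (auto simp: abs_le_iff)
    ultimately show "x \<in> (\<lambda>p. fst p *\<^sub>R b + snd p) ` ({-1..1} \<times> Cset F)"
      by (intro image_eqI[of _ _ "(t b, \<Sum>a\<in>F. t a *\<^sub>R a)"]) auto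
  qed
next
  show "(\<lambda>p. fst p *\<^sub>R b + snd p) ` ({-1..1} \<times> Cset F) \<subseteq> Cset (insert b F)"
  proof
    fix x assume "x \<in> (\<lambda>p. fst p *\<^sub>R b + snd p) ` ({-1..1} \<times> Cset F)"
    then obtain s t where st: "x = s *\<^sub>R b + (\<Sum>a\<in>F. t a *\<^sub>R a)" "s \<in> {-1..1}" "\<forall>a\<in>F. \<bar>t a\<bar> \<le> 1"
      unfolding Cset_def by auto
    define t' where "t' = t(b := s)"
    have "(\<Sum>a\<in>F. t' a *\<^sub>R a) = (\<Sum>a\<in>F. t a *\<^sub>R a)"
      using assms(1) by (intro sum.cong) (auto simp: t'_def)
    hence "x = (\<Sum>a\<in>insert b F. t' a *\<^sub>R a)" using st(1) assms by (simp add: t'_def)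
    moreover have "\<forall>a\<in>insert b F. \<bar>t' a\<bar> \<le> 1" using st(2,3) by (auto simp: t'_def)
    ultimately show "x \<in> Cset (insert b F)" unfolding Cset_def by blast
  qed
qed

lemma compact_Cset:
  fixes F :: "'a::{real_vector,topological_space} set"
  assumes "tvs TYPE('a)" "finite F"
  shows "compact (Cset F)"
  using assms(2)
proof (induction F rule: finite_induct)
  case empty
  have "Cset ({}::'a set) = {0}" unfolding Cset_def by auto
  thus ?case by simp
next
  case (insert b F)
  have c: "continuous_on UNIV (\<lambda>p::real\<times>'a. fst p *\<^sub>R b + snd p)"
    by (intro cont_add[OF assms(1)] cont_scale[OF assms(1)] continuous_intros)
  show ?case unfolding Cset_insert[OF insert.hyps(2,1)]
    by (rule compact_continuous_image[OF continuous_on_subset[OF c]])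
       (auto intro: compact_Times insert.IH)
qed


definition Sset :: "'a::real_vector set \<Rightarrow> 'a set" where
  "Sset F = (\<Union>b\<in>F. \<Union>\<sigma>\<in>{-1,1::real}. (\<lambda>y. \<sigma> *\<^sub>R b + y) ` Cset (F - {b}))"

lemma in_Sset:
  assumes "finite F" "\<forall>a\<in>F. \<bar>t a\<bar> \<le> 1" "b \<in> F" "\<bar>t b\<bar> = 1"
  shows "(\<Sum>a\<in>F. t a *\<^sub>R a) \<in> Sset F"
proof -
  have e: "(\<Sum>a\<in>F. t a *\<^sub>R a) = t b *\<^sub>R b + (\<Sum>a\<in>F-{b}. t a *\<^sub>R a)"
    using assms by (simp add: sum.remove)
  have "(\<Sum>a\<in>F-{b}. t a *\<^sub>R a) \<in> Cset (F - {b})" using assms(2) unfolding Cset_def by auto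
  moreover have "t b \<in> {-1,1}" using assms(4) by (auto simp: abs_if split: if_splits)
  ultimately show ?thesis unfolding Sset_def e using assms(3) by blast
qed

lemma zero_notin_Sset:
  fixes F :: "'a::real_vector set"
  assumes "finite F" "independent F"
  shows "0 \<notin> Sset F"
proof
  assume "0 \<in> Sset F"
  then obtain b \<sigma> y where b0: "b \<in> F" "\<sigma> \<in> {-1,1}" "y \<in> Cset (F-{b})" "0 = \<sigma> *\<^sub>R b + y"
    unfolding Sset_def by blast
  then obtain t where "y = (\<Sum>a\<in>F-{b}. t a *\<^sub>R a)" unfolding Cset_def by blast
  with b0 have b: "b \<in> F" "\<sigma> \<in> {-1,1}" "0 = \<sigma> *\<^sub>R b + (\<Sum>a\<in>F-{b}. t a *\<^sub>R a)" by auto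
  define u where "u = t(b := \<sigma>)"
  have "(\<Sum>a\<in>F-{b}. u a *\<^sub>R a) = (\<Sum>a\<in>F-{b}. t a *\<^sub>R a)"
    by (intro sum.cong) (auto simp: u_def)
  hence "(\<Sum>a\<in>F. u a *\<^sub>R a) = 0" using b assms(1) by (simp add: sum.remove u_def)
  moreover have "u b \<noteq> 0" using b(2) by (auto simp: u_def)
  ultimately have "dependent F" using b(1) assms(1) unfolding dependent_explicit by blast
  thus False using assms(2) by simp
qed

lemma fin_tli:
  fixes A :: "'a::{real_vector,t2_space} set"
  assumes tv: "tvs TYPE('a)" and fin: "finite A" and ind: "independent A"
  shows "top_lin_indep A"
  unfolding top_lin_indep_def
proof (intro conjI allI impI)
  show "A \<subseteq> UNIV - {0}" using ind dependent_zero by blast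
  fix W :: "'a set" assume "nbhd0 W"
  then obtain W1 where W1: "open W1" "0 \<in> W1" "W1 \<subseteq> W" unfolding nbhd0_def by auto
  obtain e where e: "e > 0" "\<forall>a\<in>A. \<forall>t. \<bar>t\<bar> \<le> e \<longrightarrow> t *\<^sub>R a \<in> W1"
    using small_scal[OF tv fin W1(1,2)] by metis
  have "compact (Sset A)" unfolding Sset_def
    by (intro compact_UN fin finite.intros ballI compact_continuous_image compact_Cset[OF tv]
              cont_add[OF tv] continuous_intros) (auto simp: fin)
  hence "closed (Sset A)" by (rule compact_imp_closed)
  hence o: "open (- Sset A)" by auto
  have z: "0 \<in> - Sset A" using zero_notin_Sset[OF fin ind] by simp
  obtain B where B: "open B" "0 \<in> B" "B \<subseteq> - Sset A" "\<And>x s. x \<in> B \<Longrightarrow> \<bar>s\<bar> \<le> 1 \<Longrightarrow> s *\<^sub>R x \<in> B"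
    using balanced_nbhd[OF tv o z] by metis
  have key: "\<forall>a\<in>A. \<bar>t a\<bar> < 1" if tB: "(\<Sum>a\<in>A. t a *\<^sub>R a) \<in> B" for t
  proof (rule ccontr)
    assume "\<not> (\<forall>a\<in>A. \<bar>t a\<bar> < 1)"
    then obtain c where c: "c \<in> A" "\<bar>t c\<bar> \<ge> 1" by auto
    define m where "m = Max ((\<lambda>a. \<bar>t a\<bar>) ` A)"
    have "\<bar>t c\<bar> \<le> m" unfolding m_def using fin c by auto
    hence m1: "m \<ge> 1" using c by simp
    obtain b where b: "b \<in> A" "\<bar>t b\<bar> = m" unfolding m_def using fin c
      by (metis (no_types, lifting) Max_in empty_iff finite_imageI image_iff image_is_empty)
    have le: "\<bar>t a\<bar> \<le> m" if "a \<in> A" for a unfolding m_def using fin that by auto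
    define t' where "t' a = t a / m" for a
    have "\<forall>a\<in>A. \<bar>t' a\<bar> \<le> 1" using le m1 by (simp add: t'_def abs_divide)
    moreover have "\<bar>t' b\<bar> = 1" using b m1 by (simp add: t'_def abs_divide)
    ultimately have "(\<Sum>a\<in>A. t' a *\<^sub>R a) \<in> Sset A" using in_Sset[OF fin _ b(1)] by blast
    moreover have "(\<Sum>a\<in>A. t' a *\<^sub>R a) = (1/m) *\<^sub>R (\<Sum>a\<in>A. t a *\<^sub>R a)"
      by (simp add: t'_def scaleR_sum_right)
    moreover have "(1/m) *\<^sub>R (\<Sum>a\<in>A. t a *\<^sub>R a) \<in> B" using B(4)[OF tB] m1 by simp
    ultimately show False using B(3) by auto
  qed
  define U where "U = (\<lambda>x. (1/e) *\<^sub>R x) -` B"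
  have cs: "continuous_on UNIV (\<lambda>x::'a. (1/e) *\<^sub>R x)"
    by (rule cont_scale[OF tv]) (auto intro: continuous_intros)
  show "\<exists>U. nbhd0 U \<and> (\<forall>F r. finite F \<longrightarrow> F \<subseteq> A \<longrightarrow> (\<Sum>a\<in>F. r a *\<^sub>R a) \<in> U \<longrightarrow> (\<forall>a\<in>F. r a *\<^sub>R a \<in> W))"
  proof (intro exI[of _ U] conjI allI impI ballI)
    have "open U" unfolding U_def by (rule open_vim[OF cs B(1)])
    moreover have "0 \<in> U" unfolding U_def using B(2) by simp
    ultimately show "nbhd0 U" unfolding nbhd0_def by auto
    fix F r c assume F: "finite F" "F \<subseteq> A" "(\<Sum>a\<in>F. r a *\<^sub>R a) \<in> U" "c \<in> F"
    define t where "t a = (if a \<in> F then r a else 0) / e" for a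
    have "(\<Sum>a\<in>A. t a *\<^sub>R a) = (1/e) *\<^sub>R (\<Sum>a\<in>A. (if a \<in> F then r a *\<^sub>R a else 0))"
      by (simp add: scaleR_sum_right) (rule sum.cong, auto simp: t_def)
    also have "(\<Sum>a\<in>A. (if a \<in> F then r a *\<^sub>R a else 0)) = (\<Sum>a\<in>F. r a *\<^sub>R a)"
      using fin F(2) by (simp add: sum.inter_restrict[symmetric] Int_absorb1) 
    finally have "(\<Sum>a\<in>A. t a *\<^sub>R a) \<in> B" using F(3) unfolding U_def by simp
    hence "\<bar>t c\<bar> < 1" using key F by auto
    hence "\<bar>r c\<bar> \<le> e" using F(4) e(1) by (simp add: t_def abs_divide)
    thus "r c *\<^sub>R c \<in> W" using e(2) F W1 by auto
  qed
qed


lemma ti_indep: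
  fixes A :: "'a::{real_vector,t2_space} set"
  assumes tv: "tvs TYPE('a)" and ti: "top_indep A"
  shows "independent A"
proof
  assume "dependent A"
  then obtain T u v where T: "finite T" "T \<subseteq> A" "(\<Sum>a\<in>T. u a *\<^sub>R a) = 0" "v \<in> T" "u v \<noteq> 0"
    unfolding dependent_explicit by blast
  have A0: "A \<subseteq> UNIV - {0}" using ti unfolding top_indep_def by (rule conjunct1)
  hence v0: "v \<noteq> 0" using T by auto
  have oV: "open (- {v})" by auto
  have "0 \<in> - {v}" using v0 by auto
  then obtain W where W: "open W" "0 \<in> W" "W \<subseteq> - {v}" "\<And>x s. x \<in> W \<Longrightarrow> \<bar>s\<bar> \<le> 1 \<Longrightarrow> s *\<^sub>R x \<in> W"
    using balanced_nbhd[OF tv oV] by metis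
  have nW: "nbhd0 W" unfolding nbhd0_def using W by auto
  have "\<exists>U. nbhd0 U \<and> (\<forall>F (z::'a \<Rightarrow> int). finite F \<longrightarrow> F \<subseteq> A \<longrightarrow>
            (\<Sum>a\<in>F. of_int (z a) *\<^sub>R a) \<in> U \<longrightarrow> (\<forall>a\<in>F. of_int (z a) *\<^sub>R a \<in> W))"
    using mp[OF spec[OF conjunct2[OF ti[unfolded top_indep_def]]] nW] .
  then obtain U where U1: "nbhd0 U" and U2: "\<forall>F (z::'a \<Rightarrow> int). finite F \<longrightarrow> F \<subseteq> A \<longrightarrow>
            (\<Sum>a\<in>F. of_int (z a) *\<^sub>R a) \<in> U \<longrightarrow> (\<forall>a\<in>F. of_int (z a) *\<^sub>R a \<in> W)"
    by (elim exE conjE)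
  from U1 obtain U0 where U0: "open U0" "0 \<in> U0" "U0 \<subseteq> U" unfolding nbhd0_def by auto
  obtain e where e: "e > 0" "\<forall>r. (\<forall>a\<in>T. \<bar>r a\<bar> \<le> e) \<longrightarrow> (\<Sum>a\<in>T. r a *\<^sub>R a) \<in> U0"
    using small_sum[OF tv T(1) U0(1,2)] by metis
  define u' where "u' a = u a / u v" for a
  have u'v: "u' v = 1" using T(5) by (simp add: u'_def)
  have su': "(\<Sum>a\<in>T. u' a *\<^sub>R a) = 0"
  proof -
    have "(\<Sum>a\<in>T. u' a *\<^sub>R a) = (1 / u v) *\<^sub>R (\<Sum>a\<in>T. u a *\<^sub>R a)"
      by (simp add: u'_def scaleR_sum_right)
    thus ?thesis using T(3) by simp
  qed
  obtain g where g: "bij_betw g {0..<card T} T" using ex_bij_betw_nat_finite[OF T(1)] by blast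
  define n where "n = card T"
  define N where "N = nat \<lceil>1/e\<rceil> + 1"
  have N0: "N > 0" unfolding N_def by simp
  have "1/e \<le> real N" unfolding N_def by linarith
  hence Ne: "1 / real N \<le> e" using e(1) N0 by (simp add: field_simps)
  obtain q p where qp: "0 < q" "\<And>i. i < n \<Longrightarrow> \<bar>of_int q * u' (g i) - of_int (p i)\<bar> < 1 / real N"
    using Dirichlet_approx_simult[OF N0, where \<theta>="\<lambda>i. u' (g i)" and n=n] by metis
  define z where "z a = (if a = v then q else p (inv_into {0..<n} g a))" for a
  define r where "r a = of_int (z a) - of_int q * u' a" for a
  have r: "\<forall>a\<in>T. \<bar>r a\<bar> \<le> e"
  proof
    fix a assume a: "a \<in> T"
    show "\<bar>r a\<bar> \<le> e"
    proof (cases "a = v")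
      case True thus ?thesis using e(1) u'v by (simp add: r_def z_def)
    next
      case False
      define i where "i = inv_into {0..<n} g a"
      have ga: "a \<in> g ` {0..<n}" using g a unfolding n_def bij_betw_def by simp
      have i: "i < n" "g i = a" using inv_into_into[OF ga] f_inv_into_f[OF ga] unfolding i_def by auto
      have "\<bar>of_int q * u' a - of_int (p i)\<bar> < 1 / real N" using qp(2)[OF i(1)] i(2) by simp
      hence "\<bar>r a\<bar> < 1 / real N" using False by (simp add: r_def z_def i_def[symmetric] abs_minus_commute)
      thus ?thesis using Ne by simp
    qed
  qed
  have "(\<Sum>a\<in>T. of_int (z a) *\<^sub>R a) = (\<Sum>a\<in>T. r a *\<^sub>R a + of_int q *\<^sub>R (u' a *\<^sub>R a))"
    by (intro sum.cong) (auto simp: r_def algebra_simps)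
  also have "\<dots> = (\<Sum>a\<in>T. r a *\<^sub>R a) + of_int q *\<^sub>R (\<Sum>a\<in>T. u' a *\<^sub>R a)"
    by (simp only: sum.distrib scaleR_sum_right)
  also have "\<dots> = (\<Sum>a\<in>T. r a *\<^sub>R a)" using su' by simp
  finally have "(\<Sum>a\<in>T. of_int (z a) *\<^sub>R a) \<in> U" using e(2) r U0 by auto
  moreover have "finite T \<longrightarrow> T \<subseteq> A \<longrightarrow> (\<Sum>a\<in>T. of_int (z a) *\<^sub>R a) \<in> U \<longrightarrow>
            (\<forall>a\<in>T. of_int (z a) *\<^sub>R a \<in> W)"
    using spec[OF spec[OF U2, of T], of z] .
  ultimately have "\<forall>a\<in>T. of_int (z a) *\<^sub>R a \<in> W" using T(1,2) by simp
  hence "of_int (z v) *\<^sub>R v \<in> W" using T(4) by simp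
  hence "of_int q *\<^sub>R v \<in> W" by (simp add: z_def)
  hence "(1 / of_int q) *\<^sub>R (of_int q *\<^sub>R v) \<in> W" by (rule W(4)) (use qp(1) in simp)
  hence "v \<in> W" using qp(1) by simp
  thus False using W(3) by auto
qed

theorem lemma3p3:
  fixes A :: "'a::{real_vector, t2_space} set"
  assumes "tvs TYPE('a)"
  shows "(top_lin_indep A \<longrightarrow> top_indep A) \<and>
         (top_indep A \<longrightarrow> independent A) \<and>
         (finite A \<longrightarrow> (top_lin_indep A \<longleftrightarrow> top_indep A) \<and> (top_indep A \<longleftrightarrow> independent A))"
proof -
  have 1: "top_lin_indep A \<longrightarrow> top_indep A"
  proof
    assume h: "top_lin_indep A"
    show "top_indep A" unfolding top_indep_def
    proof (intro conjI allI impI)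
      show "A \<subseteq> UNIV - {0}" using h unfolding top_lin_indep_def by (rule conjunct1)
      fix W :: "'a set" assume nW: "nbhd0 W"
      have ex: "\<exists>U. nbhd0 U \<and> (\<forall>F (r::'a \<Rightarrow> real). finite F \<longrightarrow> F \<subseteq> A \<longrightarrow>
            (\<Sum>a\<in>F. r a *\<^sub>R a) \<in> U \<longrightarrow> (\<forall>a\<in>F. r a *\<^sub>R a \<in> W))"
        using mp[OF spec[OF conjunct2[OF h[unfolded top_lin_indep_def]]] nW] .
      then obtain U where U1: "nbhd0 U" and U2: "\<forall>F (r::'a \<Rightarrow> real). finite F \<longrightarrow> F \<subseteq> A \<longrightarrow>
            (\<Sum>a\<in>F. r a *\<^sub>R a) \<in> U \<longrightarrow> (\<forall>a\<in>F. r a *\<^sub>R a \<in> W)"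
        by (elim exE conjE)
      show "\<exists>U. nbhd0 U \<and> (\<forall>F (z::'a \<Rightarrow> int). finite F \<longrightarrow> F \<subseteq> A \<longrightarrow>
            (\<Sum>a\<in>F. of_int (z a) *\<^sub>R a) \<in> U \<longrightarrow> (\<forall>a\<in>F. of_int (z a) *\<^sub>R a \<in> W))"
      proof (intro exI[of _ U] conjI allI impI)
        show "nbhd0 U" by (rule U1)
        fix F and z :: "'a \<Rightarrow> int"
        assume "finite F" "F \<subseteq> A" "(\<Sum>a\<in>F. of_int (z a) *\<^sub>R a) \<in> U"
        moreover have "finite F \<longrightarrow> F \<subseteq> A \<longrightarrow> (\<Sum>a\<in>F. of_int (z a) *\<^sub>R a) \<in> U \<longrightarrow>
            (\<forall>a\<in>F. of_int (z a) *\<^sub>R a \<in> W)"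
          using spec[OF spec[OF U2, of F], of "\<lambda>a. of_int (z a)"] .
        ultimately show "\<forall>a\<in>F. of_int (z a) *\<^sub>R a \<in> W" by simp
      qed
    qed
  qed
  have 2: "top_indep A \<longrightarrow> independent A" using ti_indep[OF assms] by blast
  have 3: "finite A \<longrightarrow> independent A \<longrightarrow> top_lin_indep A" using fin_tli[OF assms] by blast
  show ?thesis using 1 2 3 by blast
qed

end
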